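(* Under the hypotheses of Theorem 5 (graph $G$, integer $k$, $\Gamma\subseteq E$ with $|\Gamma|\ge 2$, $0<\epsilon<1$, positive integer $\ell$, and $s\ge\frac{(\ell+1)\ln|\Gamma|}{2\epsilon^2}$ independent uniformly random permutations used to form the estimates $\Phi'_e$), fix a budget $b\le|\Gamma|$. Let $\Phi_{O1}\ge\Phi_{O2}\ge\dots\ge\Phi_{Ob}$ be the $b$ largest exact Shapley values among edges of $\Gamma$, and let $B$ be the set of $b$ edges with the largest estimates $\Phi'_e$, whose exact Shapley values sorted in non-increasing order are $\Phi_{A1}\ge\Phi_{A2}\ge\dots\ge\Phi_{Ab}$. Then for every $i\in\{1,\dots,b\}$, $$\Pr\big(|\Phi_{Oi}-\Phi_{Ai}|<2\epsilon\cdot N_k\big)\ \ge\ 1-2|\Gamma|^{-\ell},$$ where $N_k$ is the number of vertices of the $k$-core of $G$.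
   Context: For a graph $G=(V,E)$ and integer $k\ge0$, the $k$-core $C_k(G)$ is the maximal induced subgraph in which every vertex has degree at least $k$; $N_k=N_k(G)$ is its number of vertices. For $P\subseteq\Gamma$, $\mathscr{V}(P)=N_k(G)-N_k((V,E\setminus P))$. For a permutation $\pi$ of $\Gamma$, $P_e(\pi)$ is the set of edges before $e$ in $\pi$. The Shapley value is $\Phi_e=\frac{1}{|\Gamma|!}\sum_{\pi}\big(\mathscr{V}(P_e(\pi)\cup\{e\})-\mathscr{V}(P_e(\pi))\big)$ over all permutations $\pi$ of $\Gamma$, and the estimate from sampled permutations $\pi_1,\dots,\pi_s$ is $\Phi'_e=\frac1s\sum_{i=1}^s\big(\mathscr{V}(P_e(\pi_i)\cup\{e\})-\mathscr{V}(P_e(\pi_i))\big)$. *)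

theory Defs
  imports "HOL-Probability.Probability" "HOL-Combinatorics.Multiset_Permutations"
begin

definition simple_graph :: "'a set \<Rightarrow> 'a set set \<Rightarrow> bool" where
  "simple_graph V E \<longleftrightarrow> finite V \<and> (\<forall>e\<in>E. e \<subseteq> V \<and> card e = 2)"

definition induced_degree :: "'a set set \<Rightarrow> 'a set \<Rightarrow> 'a \<Rightarrow> nat" where
  "induced_degree E S v = card {u \<in> S. {u, v} \<in> E}"

text \<open>Vertex set of the k-core: the maximal vertex set S \<subseteq> V whose induced
  subgraph has minimum degree at least k (= union of all such sets).\<close>
definition kcore :: "nat \<Rightarrow> 'a set \<Rightarrow> 'a set set \<Rightarrow> 'a set" where
  "kcore k V E = \<Union>{S. S \<subseteq> V \<and> (\<forall>v\<in>S. k \<le> induced_degree E S v)}"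

definition Nk :: "nat \<Rightarrow> 'a set \<Rightarrow> 'a set set \<Rightarrow> nat" where
  "Nk k V E = card (kcore k V E)"

definition coal_val :: "nat \<Rightarrow> 'a set \<Rightarrow> 'a set set \<Rightarrow> 'a set set \<Rightarrow> real" where
  "coal_val k V E P = real (Nk k V E) - real (Nk k V (E - P))"

text \<open>Edges before e in the permutation \<pi> (a list enumerating \<Gamma>).\<close>
definition pred_set :: "'e list \<Rightarrow> 'e \<Rightarrow> 'e set" where
  "pred_set \<pi> e = set (takeWhile (\<lambda>x. x \<noteq> e) \<pi>)"

definition marg :: "nat \<Rightarrow> 'a set \<Rightarrow> 'a set set \<Rightarrow> 'a set list \<Rightarrow> 'a set \<Rightarrow> real" where
  "marg k V E \<pi> e = coal_val k V E (pred_set \<pi> e \<union> {e}) - coal_val k V E (pred_set \<pi> e)"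

definition shapley :: "nat \<Rightarrow> 'a set \<Rightarrow> 'a set set \<Rightarrow> 'a set set \<Rightarrow> 'a set \<Rightarrow> real" where
  "shapley k V E \<Gamma> e = (\<Sum>\<pi>\<in>permutations_of_set \<Gamma>. marg k V E \<pi> e) / fact (card \<Gamma>)"

definition shapley_est :: "nat \<Rightarrow> 'a set \<Rightarrow> 'a set set \<Rightarrow> nat \<Rightarrow> (nat \<Rightarrow> 'a set list) \<Rightarrow> 'a set \<Rightarrow> real" where
  "shapley_est k V E s \<omega> e = (\<Sum>i<s. marg k V E (\<omega> i) e) / real s"

definition perm_samples :: "'e set \<Rightarrow> nat \<Rightarrow> (nat \<Rightarrow> 'e list) pmf" where
  "perm_samples \<Gamma> s = Pi_pmf {..<s} [] (\<lambda>_. pmf_of_set (permutations_of_set \<Gamma>))"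

definition is_top :: "nat \<Rightarrow> ('e \<Rightarrow> real) \<Rightarrow> 'e set \<Rightarrow> 'e set \<Rightarrow> bool" where
  "is_top b f \<Gamma> B \<longleftrightarrow> B \<subseteq> \<Gamma> \<and> card B = b \<and> (\<forall>x\<in>B. \<forall>y\<in>\<Gamma> - B. f y \<le> f x)"

text \<open>i-th largest (1-based, with multiplicity) value of f on the finite set A.\<close>
definition nth_largest :: "('e \<Rightarrow> real) \<Rightarrow> 'e set \<Rightarrow> nat \<Rightarrow> real" where
  "nth_largest f A i = rev (sorted_list_of_multiset (image_mset f (mset_set A))) ! (i - 1)"

end

theory Submission
  imports Defs
begin

lemma kcore_mono:
  assumes "finite V" "E' \<subseteq> E"
  shows "kcore k V E' \<subseteq> kcore k V E"
proof -
  have "induced_degree E' S v \<le> induced_degree E S v" if "S \<subseteq> V" for S v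
  proof -
    have "finite S" using that assms finite_subset by blast
    then show ?thesis unfolding induced_degree_def by (intro card_mono) (use assms in auto)
  qed
  note deg = this
  show ?thesis
  proof
    fix x assume "x \<in> kcore k V E'"
    then obtain S where S: "S \<subseteq> V" "\<forall>v\<in>S. k \<le> induced_degree E' S v" "x \<in> S"
      unfolding kcore_def by auto
    have "\<forall>v\<in>S. k \<le> induced_degree E S v"
      using S(2) deg[OF S(1)] le_trans by blast
    with S show "x \<in> kcore k V E" unfolding kcore_def by auto
  qed
qed

lemma kcore_sub: "kcore k V E \<subseteq> V" unfolding kcore_def by auto

lemma Nk_mono:
  assumes "finite V" "E' \<subseteq> E"
  shows "Nk k V E' \<le> Nk k V E"
  unfolding Nk_def by (rule card_mono[OF finite_subset[OF kcore_sub assms(1)] kcore_mono[OF assms]])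

lemma marg_bounds:
  assumes "finite V"
  shows "0 \<le> marg k V E \<pi> e \<and> marg k V E \<pi> e \<le> real (Nk k V E)"
proof -
  let ?P = "pred_set \<pi> e"
  have 1: "Nk k V (E - (?P \<union> {e})) \<le> Nk k V (E - ?P)" by (rule Nk_mono[OF assms]) auto
  have 2: "Nk k V (E - ?P) \<le> Nk k V E" by (rule Nk_mono[OF assms]) auto
  show ?thesis unfolding marg_def coal_val_def using 1 2 by simp
qed

lemma expect_marg:
  assumes "finite \<Gamma>"
  shows "measure_pmf.expectation (pmf_of_set (permutations_of_set \<Gamma>)) (\<lambda>\<pi>. marg k V E \<pi> e)
     = shapley k V E \<Gamma> e"
proof -
  have ne: "permutations_of_set \<Gamma> \<noteq> {}" by (simp add: assms)
  have fin: "finite (permutations_of_set \<Gamma>)" by simp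
  show ?thesis unfolding shapley_def
    by (subst integral_pmf_of_set[OF ne fin]) (simp add: assms)
qed

lemma hoeff_edge:
  assumes "finite V" "finite \<Gamma>" "s > 0" "Nk k V E > 0" "\<epsilon> > 0"
  shows "measure_pmf.prob (perm_samples \<Gamma> s)
     {\<omega>. \<bar>shapley_est k V E s \<omega> e - shapley k V E \<Gamma> e\<bar> \<ge> \<epsilon> * real (Nk k V E)}
     \<le> 2 * exp (- 2 * real s * \<epsilon>^2)"
proof -
  define P where "P = perm_samples \<Gamma> s"
  define N where "N = real (Nk k V E)"
  define X where "X = (\<lambda>i (\<omega>::nat \<Rightarrow> 'a set list). marg k V E (\<omega> i) e)"
  define Y where "Y = (\<lambda>\<omega>::nat \<Rightarrow> 'a set list. marg k V E (\<omega> 0) e)"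
  have Npos: "N > 0" using assms N_def by simp
  have comp: "map_pmf (\<lambda>\<omega>. \<omega> i) P = pmf_of_set (permutations_of_set \<Gamma>)" if "i < s" for i
    unfolding P_def perm_samples_def using that by (subst Pi_pmf_component) auto
  have distr: "distr (measure_pmf P) borel (X i) = distr (measure_pmf P) borel Y" if "i \<in> {..<s}" for i
  proof -
    have "distr (measure_pmf P) borel (X i) =
          distr (measure_pmf (map_pmf (\<lambda>\<omega>. \<omega> i) P)) borel (\<lambda>\<pi>. marg k V E \<pi> e)"
      unfolding map_pmf_rep_eq X_def by (subst distr_distr) (auto simp: o_def)
    also have "\<dots> = distr (measure_pmf (map_pmf (\<lambda>\<omega>. \<omega> 0) P)) borel (\<lambda>\<pi>. marg k V E \<pi> e)"
      using comp[of i] comp[of 0] that assms by simp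
    also have "\<dots> = distr (measure_pmf P) borel Y"
      unfolding map_pmf_rep_eq Y_def by (subst distr_distr) (auto simp: o_def)
    finally show ?thesis .
  qed
  interpret H: Hoeffding_ineq_iid "measure_pmf P" "{..<s}" X Y 0 N "measure_pmf.expectation P Y"
  proof unfold_locales
    show "prob_space.indep_vars (measure_pmf P) (\<lambda>_. borel) X {..<s}"
      unfolding P_def perm_samples_def X_def
      by (intro prob_space.indep_vars_compose2[OF _ indep_vars_Pi_pmf])
         (auto simp: measure_pmf.prob_space_axioms)
    show "AE x in measure_pmf P. Y x \<in> {0..N}"
      using marg_bounds[OF assms(1)] unfolding Y_def N_def by simp
  qed (auto simp: distr)
  have EY: "measure_pmf.expectation P Y = shapley k V E \<Gamma> e"
  proof -
    have "measure_pmf.expectation P Y = measure_pmf.expectation (map_pmf (\<lambda>\<omega>. \<omega> 0) P) (\<lambda>\<pi>. marg k V E \<pi> e)"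
      unfolding Y_def by simp
    also have "\<dots> = shapley k V E \<Gamma> e" using comp[of 0] assms expect_marg by simp
    finally show ?thesis .
  qed
  have "measure_pmf.prob P {x\<in>space (measure_pmf P). \<bar>(\<Sum>i\<in>{..<s}. X i x) / card {..<s} - measure_pmf.expectation P Y\<bar> \<ge> \<epsilon> * N}
     \<le> 2 * exp (-2 * real (card {..<s}) * (\<epsilon> * N)\<^sup>2 / (N - 0)\<^sup>2)"
    by (rule H.Hoeffding_ineq_abs_ge') (use assms Npos in auto)
  moreover have "2 * exp (-2 * real (card {..<s}) * (\<epsilon> * N)\<^sup>2 / (N - 0)\<^sup>2) = 2 * exp (- 2 * real s * \<epsilon>^2)"
    using Npos by (simp add: power_mult_distrib)
  ultimately have "measure_pmf.prob P {\<omega>. \<epsilon> * N \<le> \<bar>(\<Sum>i<s. X i \<omega>) / real s - shapley k V E \<Gamma> e\<bar>}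
     \<le> 2 * exp (- 2 * real s * \<epsilon>^2)" by (simp add: EY)
  then show ?thesis
    unfolding P_def N_def X_def shapley_est_def by simp
qed
lemma nl_alt:
  assumes "finite A" "1 \<le> i" "i \<le> card A"
  shows "nth_largest f A i = sorted_list_of_multiset (image_mset f (mset_set A)) ! (card A - i)"
proof -
  have len: "length (sorted_list_of_multiset (image_mset f (mset_set A))) = card A"
    by (metis assms(1) mset_sorted_list_of_multiset size_image_mset size_mset size_mset_set)
  show ?thesis unfolding nth_largest_def using assms len
    by (subst rev_nth) (auto simp: Suc_diff_le)
qed

lemma nl_count:
  assumes "finite A"
  shows "length (filter P (sorted_list_of_multiset (image_mset f (mset_set A)))) = card {a\<in>A. P (f a)}"
proof -
  have "size (mset (filter P (sorted_list_of_multiset (image_mset f (mset_set A)))))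
      = size (filter_mset P (image_mset f (mset_set A)))"
    by (simp only: mset_filter mset_sorted_list_of_multiset)
  also have "\<dots> = card {a\<in>A. P (f a)}" using assms by (simp add: filter_mset_image_mset)
  finally show ?thesis by (simp only: size_mset)
qed

lemma nl_ge:
  assumes "finite A" "1 \<le> i" "i \<le> card A" "W \<subseteq> A" "card W \<ge> i" "\<forall>w\<in>W. t \<le> f w"
  shows "t \<le> nth_largest f A i"
proof (rule ccontr)
  define S where "S = sorted_list_of_multiset (image_mset f (mset_set A))"
  define n where "n = card A"
  define m where "m = n - i"
  have len: "length S = n" unfolding S_def n_def
    by (metis assms(1) mset_sorted_list_of_multiset size_image_mset size_mset size_mset_set)
  have sorted: "sorted S" unfolding S_def by simp
  assume "\<not> t \<le> nth_largest f A i"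
  hence lt: "S ! m < t" using nl_alt[OF assms(1-3)] unfolding S_def m_def n_def by simp
  have "{j. j < length S \<and> t \<le> S ! j} \<subseteq> {m+1..<n}"
  proof
    fix j assume j: "j \<in> {j. j < length S \<and> t \<le> S ! j}"
    have "\<not> j \<le> m"
    proof
      assume "j \<le> m"
      hence "S ! j \<le> S ! m" using sorted len assms m_def n_def by (intro sorted_nth_mono) auto
      with lt j show False by simp
    qed
    with j len show "j \<in> {m+1..<n}" by auto
  qed
  hence "card {j. j < length S \<and> t \<le> S ! j} \<le> card {m+1..<n}" by (intro card_mono) auto
  also have "\<dots> = i - 1" using assms unfolding m_def n_def by simp
  finally have c1: "length (filter (\<lambda>x. t \<le> x) S) \<le> i - 1" by (simp add: length_filter_conv_card)
  have "card W \<le> card {a\<in>A. t \<le> f a}" using assms by (intro card_mono) auto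
  also have "\<dots> = length (filter (\<lambda>x. t \<le> x) S)" by (simp add: S_def nl_count[OF assms(1)])
  finally show False using c1 assms by simp
qed

lemma nl_ex:
  assumes "finite A" "1 \<le> i" "i \<le> card A"
  shows "i \<le> card {a\<in>A. nth_largest f A i \<le> f a}"
proof -
  define S where "S = sorted_list_of_multiset (image_mset f (mset_set A))"
  define n where "n = card A"
  define m where "m = n - i"
  have len: "length S = n" unfolding S_def n_def
    by (metis assms(1) mset_sorted_list_of_multiset size_image_mset size_mset size_mset_set)
  have sorted: "sorted S" unfolding S_def by simp
  have eq: "nth_largest f A i = S ! m" using nl_alt[OF assms(1-3)] unfolding S_def m_def n_def by simp
  have "{m..<n} \<subseteq> {j. j < length S \<and> S ! m \<le> S ! j}"
    using sorted len by (auto intro: sorted_nth_mono)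
  hence "card {m..<n} \<le> card {j. j < length S \<and> S ! m \<le> S ! j}" by (intro card_mono) auto
  also have "\<dots> = length (filter (\<lambda>x. S ! m \<le> x) S)" by (simp add: length_filter_conv_card)
  also have "\<dots> = card {a\<in>A. S ! m \<le> f a}" by (simp add: S_def nl_count[OF assms(1)])
  finally show ?thesis using eq assms unfolding m_def n_def by simp
qed

lemma nl_gt:
  assumes "finite A" "1 \<le> i" "i \<le> card A" "W \<subseteq> A" "card W \<ge> i" "\<forall>w\<in>W. t < f w"
  shows "t < nth_largest f A i"
proof -
  have fW: "finite W" using assms finite_subset by blast
  have neW: "W \<noteq> {}" using assms by auto
  have "t < Min (f ` W)" using fW neW assms by simp
  also have "Min (f ` W) \<le> nth_largest f A i"
    by (rule nl_ge[OF assms(1-5)]) (use fW in auto)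
  finally show ?thesis .
qed

lemma det:
  fixes f g :: "'e \<Rightarrow> real"
  assumes "finite \<Gamma>" "is_top b g \<Gamma> B" "1 \<le> i" "i \<le> b" "\<forall>e\<in>\<Gamma>. \<bar>g e - f e\<bar> < \<delta>"
  shows "\<bar>nth_largest f \<Gamma> i - nth_largest f B i\<bar> < 2 * \<delta>"
proof -
  have BG: "B \<subseteq> \<Gamma>" and cB: "card B = b" and top: "\<forall>x\<in>B. \<forall>y\<in>\<Gamma> - B. g y \<le> g x"
    using assms(2) unfolding is_top_def by auto
  have fB: "finite B" using BG assms(1) finite_subset by blast
  have bG: "b \<le> card \<Gamma>" using cB BG assms(1) card_mono by blast
  have iG: "i \<le> card \<Gamma>" using bG assms by simp
  have iB: "i \<le> card B" using cB assms by simp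
  define Ov where "Ov = nth_largest f \<Gamma> i"
  define Ai where "Ai = nth_largest f B i"
  have 1: "Ai \<le> Ov" unfolding Ov_def
    by (rule nl_ge[OF assms(1) assms(3) iG, of "{x\<in>B. Ai \<le> f x}"])
       (use BG nl_ex[OF fB assms(3) iB, of f] Ai_def in auto)
  define c where "c = nth_largest g \<Gamma> i"
  have c: "Ov - \<delta> < c" unfolding c_def
  proof (rule nl_gt[OF assms(1) assms(3) iG, of "{x\<in>\<Gamma>. Ov \<le> f x}"])
    show "i \<le> card {x \<in> \<Gamma>. Ov \<le> f x}" using nl_ex[OF assms(1) assms(3) iG, of f] Ov_def by simp
    show "\<forall>w\<in>{x \<in> \<Gamma>. Ov \<le> f x}. Ov - \<delta> < g w" using assms(5) by fastforce
  qed auto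
  define U where "U = {x\<in>\<Gamma>. c \<le> g x}"
  have cU: "i \<le> card U" using nl_ex[OF assms(1) assms(3) iG, of g] unfolding U_def c_def by simp
  define W where "W = {x\<in>B. c \<le> g x}"
  have cW: "i \<le> card W"
  proof (cases "U \<subseteq> B")
    case True
    hence "U \<subseteq> W" unfolding U_def W_def by auto
    hence "card U \<le> card W" using fB W_def by (intro card_mono) auto
    then show ?thesis using cU by simp
  next
    case False
    then obtain y where y: "y \<in> U" "y \<notin> B" by auto
    have "c \<le> g x" if "x \<in> B" for x
    proof -
      have "g y \<le> g x" using top y that U_def by auto
      moreover have "c \<le> g y" using y U_def by auto
      ultimately show ?thesis by simp
    qed
    hence "W = B" unfolding W_def by auto
    then show ?thesis using iB by simp
  qed
  have 2: "Ov - 2 * \<delta> < Ai" unfolding Ai_def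
  proof (rule nl_gt[OF fB assms(3) iB _ cW[unfolded W_def]])
    show "{x \<in> B. c \<le> g x} \<subseteq> B" by auto
    show "\<forall>w\<in>{x \<in> B. c \<le> g x}. Ov - 2 * \<delta> < f w"
    proof
      fix w assume w: "w \<in> {x \<in> B. c \<le> g x}"
      hence "\<bar>g w - f w\<bar> < \<delta>" using assms(5) BG by auto
      with w c show "Ov - 2 * \<delta> < f w" by auto
    qed
  qed
  show ?thesis using 1 2 Ov_def Ai_def by simp
qed


theorem corollary1:
  fixes V :: "'a set" and E \<Gamma> :: "'a set set" and k l s b i :: nat and \<epsilon> :: real
    and sel :: "('a set \<Rightarrow> real) \<Rightarrow> 'a set set"
  assumes "simple_graph V E"
    and "\<Gamma> \<subseteq> E" and "card \<Gamma> \<ge> 2"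
    and "0 < \<epsilon>" and "\<epsilon> < 1"
    and "l \<ge> 1"
    and "real s \<ge> (real l + 1) * ln (real (card \<Gamma>)) / (2 * \<epsilon>^2)"
    and "b \<le> card \<Gamma>"
    and "\<And>f. is_top b f \<Gamma> (sel f)"
    and "Nk k V E > 0"
    and "1 \<le> i" and "i \<le> b"
  shows "measure_pmf.prob (perm_samples \<Gamma> s)
           {\<omega>. \<bar>nth_largest (shapley k V E \<Gamma>) \<Gamma> i
                 - nth_largest (shapley k V E \<Gamma>) (sel (shapley_est k V E s \<omega>)) i\<bar>
               < 2 * \<epsilon> * real (Nk k V E)}
         \<ge> 1 - 2 / real (card \<Gamma>) ^ l"
proof -
  define n where "n = card \<Gamma>"
  define N where "N = real (Nk k V E)"
  define P where "P = perm_samples \<Gamma> s"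
  have finV: "finite V" using assms(1) unfolding simple_graph_def by simp
  have n2: "n \<ge> 2" using assms(3) n_def by simp
  have finG: "finite \<Gamma>" using assms(3) card.infinite by fastforce
  have lnpos: "ln (real n) > 0" using n2 by simp
  have eps2: "2 * \<epsilon>^2 > 0" using assms(4) by simp
  have key: "(real l + 1) * ln (real n) \<le> 2 * real s * \<epsilon>^2"
    using assms(7) eps2 unfolding n_def by (simp add: pos_divide_le_eq mult_ac)
  have spos: "s > 0"
  proof (rule ccontr)
    assume "\<not> s > 0" hence "s = 0" by simp
    moreover have "(real l + 1) * ln (real n) > 0" using lnpos by (intro mult_pos_pos) auto
    ultimately show False using key by simp
  qed
  define bad where "bad = (\<lambda>e. {\<omega>. \<epsilon> * N \<le> \<bar>shapley_est k V E s \<omega> e - shapley k V E \<Gamma> e\<bar>})"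
  have expb: "exp (- 2 * real s * \<epsilon>^2) \<le> 1 / real n ^ (l + 1)"
  proof -
    have "exp (- 2 * real s * \<epsilon>^2) \<le> exp (- ((real l + 1) * ln (real n)))" using key by simp
    also have "(real l + 1) * ln (real n) = ln (real n ^ (l + 1))"
    proof -
      have "ln (real n ^ (l + 1)) = real (l + 1) * ln (real n)" by (rule ln_realpow)
      then show ?thesis by simp
    qed
    also have "exp (- ln (real n ^ (l + 1))) = 1 / real n ^ (l + 1)"
      using n2 by (simp add: exp_minus divide_inverse)
    finally show ?thesis .
  qed
  have pb: "measure_pmf.prob P (bad e) \<le> 2 / real n ^ (l + 1)" for e
  proof -
    have "measure_pmf.prob P (bad e) \<le> 2 * exp (- 2 * real s * \<epsilon>^2)"
      unfolding P_def bad_def N_def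
      by (rule hoeff_edge[OF finV finG spos assms(10) assms(4)])
    also have "\<dots> \<le> 2 / real n ^ (l + 1)" using expb by simp
    finally show ?thesis .
  qed
  have "measure_pmf.prob P (\<Union>e\<in>\<Gamma>. bad e) \<le> (\<Sum>e\<in>\<Gamma>. measure_pmf.prob P (bad e))"
    by (rule measure_pmf.finite_measure_subadditive_finite) (use finG in auto)
  also have "\<dots> \<le> (\<Sum>e\<in>\<Gamma>. 2 / real n ^ (l + 1))" by (intro sum_mono pb)
  also have "\<dots> = 2 / real n ^ l" using n2 by (simp add: n_def[symmetric] field_simps)
  finally have ub: "measure_pmf.prob P (\<Union>e\<in>\<Gamma>. bad e) \<le> 2 / real n ^ l" .
  have sub: "UNIV - (\<Union>e\<in>\<Gamma>. bad e) \<subseteq>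
      {\<omega>. \<bar>nth_largest (shapley k V E \<Gamma>) \<Gamma> i
                 - nth_largest (shapley k V E \<Gamma>) (sel (shapley_est k V E s \<omega>)) i\<bar>
               < 2 * \<epsilon> * real (Nk k V E)}"
  proof
    fix \<omega> assume "\<omega> \<in> UNIV - (\<Union>e\<in>\<Gamma>. bad e)"
    hence h: "\<forall>e\<in>\<Gamma>. \<bar>shapley_est k V E s \<omega> e - shapley k V E \<Gamma> e\<bar> < \<epsilon> * N"
      unfolding bad_def by auto
    have "\<bar>nth_largest (shapley k V E \<Gamma>) \<Gamma> i
                 - nth_largest (shapley k V E \<Gamma>) (sel (shapley_est k V E s \<omega>)) i\<bar> < 2 * (\<epsilon> * N)"
      by (rule det[OF finG assms(9) assms(11) assms(12) h])
    then show "\<omega> \<in> {\<omega>. \<bar>nth_largest (shapley k V E \<Gamma>) \<Gamma> i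
                 - nth_largest (shapley k V E \<Gamma>) (sel (shapley_est k V E s \<omega>)) i\<bar>
               < 2 * \<epsilon> * real (Nk k V E)}" unfolding N_def by (simp add: mult_ac)
  qed
  have "1 - 2 / real n ^ l \<le> 1 - measure_pmf.prob P (\<Union>e\<in>\<Gamma>. bad e)" using ub by simp
  also have "\<dots> = measure_pmf.prob P (UNIV - (\<Union>e\<in>\<Gamma>. bad e))"
    using measure_pmf.prob_compl[of "\<Union>e\<in>\<Gamma>. bad e" P] by simp
  also have "\<dots> \<le> measure_pmf.prob P {\<omega>. \<bar>nth_largest (shapley k V E \<Gamma>) \<Gamma> i
                 - nth_largest (shapley k V E \<Gamma>) (sel (shapley_est k V E s \<omega>)) i\<bar>
               < 2 * \<epsilon> * real (Nk k V E)}"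
    by (rule measure_pmf.finite_measure_mono[OF sub]) simp
  finally show ?thesis unfolding P_def n_def .
qed

end
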